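(* Let $\alpha\in(0,1)$ and $\nu\in\mathbb{N}$ with $2\nu>1/(1-\alpha)$, and let $K_{\alpha,\nu}(x)=\sum_{k=0}^{\infty}2^{-2\alpha\nu k}\phi(2^{2\nu k}x)$, where $\phi$ is the $2$-periodic function with $\phi(x)=|x|$ on $[-1,1]$. Then for every $M\ge 1$ and every $m\in\mathbb{N}$, \[ \frac{1}{2M}\int_{-M}^{M}\left|\frac{K_{\alpha,\nu}(x+2^{-2\nu m-1})-K_{\alpha,\nu}(x)}{2^{-2\nu m-1}}\right|dx\ \ge\ \frac14\,K(m,\nu,\alpha,1), \] where $K(m,\nu,\alpha,1)=\dfrac{2^{2\nu(1-\alpha)}-2}{2^{2\nu(1-\alpha)}-1}\big(2^{2\nu(1-\alpha)}\big)^{m}$. *)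

theory Defs
  imports "HOL-Analysis.Analysis"
begin

text \<open>The 2-periodic function with phi x = |x| on [-1,1]: distance from x to the
  even integer 2 * floor((x+1)/2).\<close>
definition phi :: "real \<Rightarrow> real" where
  "phi x = \<bar>x - 2 * real_of_int \<lfloor>(x + 1) / 2\<rfloor>\<bar>"

definition K_fun :: "real \<Rightarrow> nat \<Rightarrow> real \<Rightarrow> real" where
  "K_fun \<alpha> \<nu> x = (\<Sum>k. 2 powr (- 2 * \<alpha> * real \<nu> * real k) * phi (2 ^ (2 * \<nu> * k) * x))"

definition K_const :: "nat \<Rightarrow> nat \<Rightarrow> real \<Rightarrow> real" where
  "K_const m \<nu> \<alpha> =
     (2 powr (2 * real \<nu> * (1 - \<alpha>)) - 2) / (2 powr (2 * real \<nu> * (1 - \<alpha>)) - 1)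
     * (2 powr (2 * real \<nu> * (1 - \<alpha>))) ^ m"

end

theory Submission
  imports Defs
begin

lemma phi_n0: "\<bar>x - 2 * real_of_int \<lfloor>(x + 1) / 2\<rfloor>\<bar> \<le> 1"
proof -
  have "real_of_int \<lfloor>(x + 1) / 2\<rfloor> \<le> (x+1)/2" "(x+1)/2 < real_of_int \<lfloor>(x + 1) / 2\<rfloor> + 1"
    by linarith+
  moreover have "x + 1 = 2 * ((x+1)/2)" by simp
  ultimately have "2 * real_of_int \<lfloor>(x + 1) / 2\<rfloor> \<le> x+1" "x+1 < 2 * real_of_int \<lfloor>(x + 1) / 2\<rfloor> + 2"
    by linarith+
  thus ?thesis by (simp add: abs_le_iff)
qed

lemma phi_le: "phi x \<le> \<bar>x - 2 * real_of_int n\<bar>"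
proof -
  define n0 where "n0 = \<lfloor>(x + 1) / 2\<rfloor>"
  have a: "\<bar>x - 2 * real_of_int n0\<bar> \<le> 1" using phi_n0 unfolding n0_def .
  have "n \<le> n0 - 1 \<or> n = n0 \<or> n \<ge> n0 + 1" by linarith
  moreover have "n \<le> n0 - 1 \<Longrightarrow> real_of_int n \<le> real_of_int n0 - 1" by linarith
  moreover have "n \<ge> n0 + 1 \<Longrightarrow> real_of_int n \<ge> real_of_int n0 + 1" by linarith
  ultimately show ?thesis using a unfolding phi_def n0_def[symmetric] by (auto simp: abs_if split: if_splits)
qed

lemma phi_eq: "\<bar>x - 2 * real_of_int n\<bar> \<le> 1 \<Longrightarrow> phi x = \<bar>x - 2 * real_of_int n\<bar>"
proof -
  assume h: "\<bar>x - 2 * real_of_int n\<bar> \<le> 1"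
  define n0 where "n0 = \<lfloor>(x + 1) / 2\<rfloor>"
  have a: "\<bar>x - 2 * real_of_int n0\<bar> \<le> 1" using phi_n0 unfolding n0_def .
  have p: "phi x = \<bar>x - 2 * real_of_int n0\<bar>" unfolding phi_def n0_def ..
  have "n \<le> n0 - 1 \<or> n = n0 \<or> n \<ge> n0 + 1" by linarith
  moreover have "n \<le> n0 - 1 \<Longrightarrow> real_of_int n \<le> real_of_int n0 - 1" by linarith
  moreover have "n \<ge> n0 + 1 \<Longrightarrow> real_of_int n \<ge> real_of_int n0 + 1" by linarith
  moreover have "\<bar>x - 2 * real_of_int n\<bar> \<le> \<bar>x - 2 * real_of_int n0\<bar>"
  proof -
    consider "n \<le> n0 - 1" | "n = n0" | "n \<ge> n0 + 1" by linarith
    thus ?thesis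
    proof cases
      case 1
      hence r: "real_of_int n \<le> real_of_int n0 - 1" by linarith
      have a1: "x - 2 * real_of_int n0 \<ge> -1" using a by (simp add: abs_le_iff)
      have h1: "x - 2 * real_of_int n \<le> 1" using h by (simp add: abs_le_iff)
      have "\<bar>x - 2 * real_of_int n\<bar> = x - 2 * real_of_int n" using r a1 by simp
      moreover have "\<bar>x - 2 * real_of_int n0\<bar> \<ge> 2 * real_of_int n0 - x" by simp
      ultimately show ?thesis using r a1 h1 by linarith
    next
      case 2 thus ?thesis by simp
    next
      case 3
      hence r: "real_of_int n \<ge> real_of_int n0 + 1" by linarith
      have a1: "x - 2 * real_of_int n0 \<le> 1" using a by (simp add: abs_le_iff)
      have h1: "x - 2 * real_of_int n \<ge> -1" using h by (simp add: abs_le_iff)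
      have "\<bar>x - 2 * real_of_int n\<bar> = 2 * real_of_int n - x" using r a1 by simp
      moreover have "\<bar>x - 2 * real_of_int n0\<bar> \<ge> x - 2 * real_of_int n0" by simp
      ultimately show ?thesis using r a1 h1 by linarith
    qed
  qed
  ultimately show ?thesis using p phi_le[of x n] by linarith
qed

lemma phi_nonneg: "0 \<le> phi x" by (simp add: phi_def)
lemma phi_le1: "phi x \<le> 1" using phi_n0 by (simp add: phi_def)

lemma phi_lip: "\<bar>phi x - phi y\<bar> \<le> \<bar>x - y\<bar>"
proof -
  have "phi x \<le> \<bar>x - 2 * real_of_int \<lfloor>(y + 1) / 2\<rfloor>\<bar>" by (rule phi_le)
  moreover have "phi y \<le> \<bar>y - 2 * real_of_int \<lfloor>(x + 1) / 2\<rfloor>\<bar>" by (rule phi_le)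
  ultimately show ?thesis unfolding phi_def by linarith
qed

lemma phi_periodic: "phi (x + 2 * real_of_int n) = phi x"
proof -
  define n0 where "n0 = \<lfloor>(x + 1) / 2\<rfloor>"
  have a: "\<bar>x - 2 * real_of_int n0\<bar> \<le> 1" using phi_n0 unfolding n0_def .
  have "phi (x + 2 * real_of_int n) = \<bar>x + 2 * real_of_int n - 2 * real_of_int (n0 + n)\<bar>"
    by (rule phi_eq) (use a in simp)
  also have "\<dots> = phi x" unfolding phi_def n0_def by simp
  finally show ?thesis .
qed

lemma phi_cont: "continuous_on S phi"
proof -
  have "1-lipschitz_on S phi"
    by (rule lipschitz_onI) (auto simp: dist_real_def phi_lip)
  thus ?thesis by (rule lipschitz_on_continuous_on)
qed

lemma phi_cont_comp[continuous_intros]: "continuous_on S f \<Longrightarrow> continuous_on S (\<lambda>x. phi (f x))"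
  using continuous_on_compose2[OF phi_cont[of UNIV], of S f] by auto

lemma integral_lower:
  fixes f :: "real \<Rightarrow> real"
  assumes cont: "continuous_on UNIV f" and nn: "\<And>x. 0 \<le> f x" and q: "0 < q" and C: "0 \<le> C"
    and lb: "\<And>(j::int) x. real_of_int j * q \<le> x \<Longrightarrow> x \<le> (real_of_int j + 1/2) * q \<Longrightarrow> f x \<ge> C"
    and M: "q \<le> M"
  shows "integral {-M..M} f \<ge> C * M / 2"
proof -
  have int: "f integrable_on {a..b}" for a b
    by (rule integrable_continuous_interval) (rule continuous_on_subset[OF cont], auto)
  have one: "integral {real_of_int j * q .. (real_of_int j + 1) * q} f \<ge> C * q / 2" for j
  proof -
    have "integral {real_of_int j * q .. (real_of_int j + 1/2) * q} f + integral {(real_of_int j + 1/2) * q .. (real_of_int j + 1) * q} f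
       = integral {real_of_int j * q .. (real_of_int j + 1) * q} f"
      by (rule Henstock_Kurzweil_Integration.integral_combine) (use q int in \<open>auto intro!: mult_right_mono\<close>)
    moreover have "integral {(real_of_int j + 1/2) * q .. (real_of_int j + 1) * q} f \<ge> 0"
      by (rule integral_nonneg) (use int nn in auto)
    moreover have "integral {real_of_int j * q .. (real_of_int j + 1/2) * q} f \<ge> integral {real_of_int j * q .. (real_of_int j + 1/2) * q} (\<lambda>_. C)"
      by (rule integral_le) (use int lb in auto)
    moreover have "integral {real_of_int j * q .. (real_of_int j + 1/2) * q} (\<lambda>_. C) = C * q / 2"
      using q by (simp add: field_simps)
    ultimately show ?thesis by linarith
  qed
  have many: "integral {real_of_int j * q .. (real_of_int j + real n) * q} f \<ge> real n * C * q / 2" for n j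
  proof (induction n arbitrary: j)
    case 0 then show ?case by simp
  next
    case (Suc n)
    have "integral {real_of_int j * q .. (real_of_int j + 1) * q} f + integral {(real_of_int j + 1) * q .. (real_of_int j + real (Suc n)) * q} f
       = integral {real_of_int j * q .. (real_of_int j + real (Suc n)) * q} f"
      by (rule Henstock_Kurzweil_Integration.integral_combine) (use q int in \<open>auto simp: field_simps\<close>)
    moreover have "integral {(real_of_int (j+1)) * q .. (real_of_int (j+1) + real n) * q} f \<ge> real n * C * q / 2"
      by (rule Suc.IH)
    moreover note one[of j]
    ultimately show ?case by (simp add: field_simps)
  qed
  define N where "N = \<lfloor>M / q\<rfloor>"
  have t1: "M / q \<ge> 1" using q M by simp
  have N1: "N \<ge> 1" using t1 unfolding N_def by linarith
  have Nle: "real_of_int N \<le> M / q" "M / q < real_of_int N + 1" unfolding N_def by linarith+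
  have NqM: "real_of_int N * q \<le> M" using Nle q by (simp add: field_simps)
  have NqM2: "real_of_int N * q \<ge> M / 2"
  proof -
    have "M / q \<le> 2 * real_of_int N" using Nle N1 by linarith
    thus ?thesis using q by (simp add: field_simps)
  qed
  have "integral {real_of_int (-N) * q .. (real_of_int (-N) + real (nat (2*N))) * q} f \<ge> real (nat (2*N)) * C * q / 2"
    by (rule many)
  moreover have "real (nat (2*N)) = 2 * real_of_int N" using N1 by simp
  ultimately have A: "integral {- (real_of_int N * q) .. real_of_int N * q} f \<ge> real_of_int N * C * q"
    by (simp add: algebra_simps)
  have B: "integral {- (real_of_int N * q) .. real_of_int N * q} f \<le> integral {-M..M} f"
    by (rule integral_subset_le) (use NqM int nn in auto)
  have "C * M / 2 \<le> real_of_int N * C * q" using NqM2 C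
    by (metis mult.commute mult.left_commute mult_left_mono times_divide_eq_right)
  thus ?thesis using A B by linarith
qed


lemma powr_k: "(2::real) powr (e * real k) = (2 powr e) ^ k"
  by (simp add: powr_realpow[symmetric] powr_powr)

lemma pow2_powr: "(2::real) ^ n = 2 powr real n"
  by (simp add: powr_realpow)

lemma summ_T: "0 < \<alpha> \<Longrightarrow> 0 < \<nu> \<Longrightarrow>
  summable (\<lambda>k. 2 powr (- 2 * \<alpha> * real \<nu> * real k) * phi (2 ^ (2 * \<nu> * k) * x))"
proof -
  assume a: "0 < \<alpha>" "0 < \<nu>"
  define r where "r = (2::real) powr (- 2 * \<alpha> * real \<nu>)"
  have r1: "r < 1" unfolding r_def using a by (intro powr_less_one) auto
  have r0: "0 < r" unfolding r_def by simp
  show ?thesis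
  proof (rule summable_comparison_test[of _ "\<lambda>k. r ^ k"])
    show "summable (\<lambda>k. r ^ k)" using r0 r1 by (intro summable_geometric) simp
    show "\<exists>N. \<forall>n\<ge>N. norm (2 powr (- 2 * \<alpha> * real \<nu> * real n) * phi (2 ^ (2 * \<nu> * n) * x)) \<le> r ^ n"
    proof (intro exI allI impI)
      fix n :: nat
      have "norm (2 powr (- 2 * \<alpha> * real \<nu> * real n) * phi (2 ^ (2 * \<nu> * n) * x))
         = r ^ n * phi (2 ^ (2 * \<nu> * n) * x)" unfolding r_def powr_k[symmetric]
        using phi_nonneg by simp
      also have "\<dots> \<le> r ^ n * 1" using r0 phi_le1 by (intro mult_left_mono) auto
      finally show "norm (2 powr (- 2 * \<alpha> * real \<nu> * real n) * phi (2 ^ (2 * \<nu> * n) * x)) \<le> r ^ n" by simp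
    qed
  qed
qed

lemma diff_finite:
  fixes \<alpha> x :: real and \<nu> m :: nat
  assumes "0 < \<alpha>" "0 < \<nu>"
  defines "h \<equiv> 1 / 2 ^ (2 * \<nu> * m + 1) :: real"
  defines "T \<equiv> \<lambda>k y. 2 powr (- 2 * \<alpha> * real \<nu> * real k) * phi (2 ^ (2 * \<nu> * k) * y)"
  shows "K_fun \<alpha> \<nu> (x + h) - K_fun \<alpha> \<nu> x = (\<Sum>k<Suc m. T k (x + h) - T k x)"
proof -
  have "K_fun \<alpha> \<nu> (x + h) - K_fun \<alpha> \<nu> x = (\<Sum>k. T k (x + h) - T k x)"
    unfolding K_fun_def T_def using summ_T assms by (intro suminf_diff) auto
  also have "\<dots> = (\<Sum>k<Suc m. T k (x + h) - T k x)"
  proof (rule suminf_finite)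
    fix k assume "k \<notin> {..<Suc m}"
    hence k: "k \<ge> Suc m" by simp
    define d where "d = 2 * \<nu> * k - (2 * \<nu> * m + 2)"
    have "2 * \<nu> * k \<ge> 2 * \<nu> * m + 2"
    proof -
      have "2 * \<nu> * k \<ge> 2 * \<nu> * Suc m" using k by (rule mult_le_mono2)
      thus ?thesis using assms(2) by simp
    qed
    hence e: "2 * \<nu> * k = (2 * \<nu> * m + 1) + 1 + d" unfolding d_def by simp
    have "(2::real) ^ (2 * \<nu> * k) * h = 2 * 2 ^ d"
      unfolding e h_def by (simp add: power_add)
    hence "(2::real) ^ (2 * \<nu> * k) * (x + h) = 2 ^ (2 * \<nu> * k) * x + 2 * real_of_int (2 ^ d)"
      by (simp add: distrib_left)
    thus "T k (x + h) - T k x = 0" unfolding T_def using phi_periodic[of "2 ^ (2 * \<nu> * k) * x" "2 ^ d"]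
      by simp
  qed simp
  finally show ?thesis .
qed

lemma phi_half: "real_of_int j \<le> y \<Longrightarrow> y \<le> real_of_int j + 1/2 \<Longrightarrow> \<bar>phi (y + 1/2) - phi y\<bar> = 1/2"
proof -
  assume y: "real_of_int j \<le> y" "y \<le> real_of_int j + 1/2"
  consider i where "j = 2 * i" | i where "j = 2 * i + 1"
    by (metis oddE evenE)
  thus ?thesis
  proof cases
    case 1
    have "phi y = \<bar>y - 2 * real_of_int i\<bar>" by (rule phi_eq) (use y 1 in auto)
    moreover have "phi (y+1/2) = \<bar>y + 1/2 - 2 * real_of_int i\<bar>" by (rule phi_eq) (use y 1 in auto)
    ultimately show ?thesis using y 1 by simp
  next
    case 2
    have "phi y = \<bar>y - 2 * real_of_int (i+1)\<bar>" by (rule phi_eq) (use y 2 in auto)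
    moreover have "phi (y+1/2) = \<bar>y + 1/2 - 2 * real_of_int (i+1)\<bar>" by (rule phi_eq) (use y 2 in auto)
    ultimately show ?thesis using y 2 by simp
  qed
qed


lemma ck_eq: "(2::real) powr (- 2 * \<alpha> * real \<nu> * real k) * 2 ^ (2 * \<nu> * k) = (2 powr (2 * real \<nu> * (1 - \<alpha>))) ^ k"
proof -
  have "(2::real) powr (- 2 * \<alpha> * real \<nu> * real k) * 2 ^ (2 * \<nu> * k)
      = 2 powr (- 2 * \<alpha> * real \<nu> * real k) * 2 powr (2 * real \<nu> * real k)"
    by (simp add: pow2_powr)
  also have "\<dots> = 2 powr (- 2 * \<alpha> * real \<nu> * real k + 2 * real \<nu> * real k)"
    by (simp only: powr_add)
  also have "\<dots> = 2 powr ((2 * real \<nu> * (1 - \<alpha>)) * real k)"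
    by (simp add: algebra_simps)
  also have "\<dots> = (2 powr (2 * real \<nu> * (1 - \<alpha>))) ^ k" by (rule powr_k)
  finally show ?thesis .
qed

lemma absdiff: "(0::real) \<le> P \<Longrightarrow> \<bar>P * a - P * b\<bar> = P * \<bar>a - b\<bar>"
  by (simp add: abs_mult flip: right_diff_distrib)

lemma pointwise:
  fixes \<alpha> x :: real and \<nu> m :: nat and j :: int
  assumes "0 < \<alpha>" "0 < \<nu>"
  defines "h \<equiv> 1 / 2 ^ (2 * \<nu> * m + 1) :: real"
  defines "T \<equiv> \<lambda>k y. 2 powr (- 2 * \<alpha> * real \<nu> * real k) * phi (2 ^ (2 * \<nu> * k) * y)"
  defines "c \<equiv> 2 powr (2 * real \<nu> * (1 - \<alpha>))"
  assumes x: "real_of_int j * (1 / 2 ^ (2 * \<nu> * m)) \<le> x" "x \<le> (real_of_int j + 1/2) * (1 / 2 ^ (2 * \<nu> * m))"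
  shows "\<bar>(\<Sum>k<Suc m. T k (x + h) - T k x) / h\<bar> \<ge> c ^ m - (\<Sum>k<m. c ^ k)"
proof -
  have h0: "h > 0" unfolding h_def by simp
  have low: "\<bar>T k (x + h) - T k x\<bar> \<le> c ^ k * h" for k
  proof -
    have "\<bar>T k (x + h) - T k x\<bar> = 2 powr (- 2 * \<alpha> * real \<nu> * real k) *
       \<bar>phi (2 ^ (2 * \<nu> * k) * x + 2 ^ (2 * \<nu> * k) * h) - phi (2 ^ (2 * \<nu> * k) * x)\<bar>"
      unfolding T_def by (subst absdiff) (simp_all add: distrib_left)
    also have "\<dots> \<le> 2 powr (- 2 * \<alpha> * real \<nu> * real k) * (2 ^ (2 * \<nu> * k) * h)"
      using phi_lip[of "2 ^ (2 * \<nu> * k) * x + 2 ^ (2 * \<nu> * k) * h" "2 ^ (2 * \<nu> * k) * x"] h0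
      by (intro mult_left_mono) auto
    also have "\<dots> = c ^ k * h" unfolding c_def ck_eq[symmetric] by simp
    finally show ?thesis .
  qed
  define y where "y = (2::real) ^ (2 * \<nu> * m) * x"
  have P0: "(0::real) < 2 ^ (2 * \<nu> * m)" by simp
  have y1: "real_of_int j \<le> y"
    using x(1) P0 unfolding y_def by (simp add: pos_divide_le_eq mult.commute)
  have y2: "y \<le> real_of_int j + 1/2"
    using x(2) P0 unfolding y_def by (simp add: pos_le_divide_eq mult.commute)
  note y = y1 y2
  have hm: "(2::real) ^ (2 * \<nu> * m) * h = 1/2" unfolding h_def by simp
  have top: "\<bar>T m (x + h) - T m x\<bar> = c ^ m * h"
  proof -
    have "\<bar>T m (x + h) - T m x\<bar> = 2 powr (- 2 * \<alpha> * real \<nu> * real m) * \<bar>phi (y + 1/2) - phi y\<bar>"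
      unfolding T_def y_def by (subst absdiff) (simp_all add: distrib_left hm)
    also have "\<dots> = 2 powr (- 2 * \<alpha> * real \<nu> * real m) * (2 ^ (2 * \<nu> * m) * h)"
      using phi_half[OF y] hm by simp
    also have "\<dots> = c ^ m * h" unfolding c_def ck_eq[symmetric] by simp
    finally show ?thesis .
  qed
  have A: "\<bar>\<Sum>k<m. T k (x + h) - T k x\<bar> \<le> (\<Sum>k<m. c ^ k) * h"
  proof -
    have "\<bar>\<Sum>k<m. T k (x + h) - T k x\<bar> \<le> (\<Sum>k<m. \<bar>T k (x + h) - T k x\<bar>)" by (rule sum_abs)
    also have "\<dots> \<le> (\<Sum>k<m. c ^ k * h)" by (rule sum_mono) (rule low)
    finally show ?thesis by (simp add: sum_distrib_right)
  qed
  have "\<bar>\<Sum>k<Suc m. T k (x + h) - T k x\<bar> \<ge> c ^ m * h - (\<Sum>k<m. c ^ k) * h"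
  proof -
    have "(\<Sum>k<Suc m. T k (x + h) - T k x) = (\<Sum>k<m. T k (x + h) - T k x) + (T m (x + h) - T m x)"
      by (rule sum.lessThan_Suc)
    thus ?thesis using A top by linarith
  qed
  also have "c ^ m * h - (\<Sum>k<m. c ^ k) * h = (c ^ m - (\<Sum>k<m. c ^ k)) * h"
    by (simp only: left_diff_distrib)
  finally have "c ^ m - (\<Sum>k<m. c ^ k) \<le> \<bar>\<Sum>k<Suc m. T k (x + h) - T k x\<bar> / h"
    using h0 by (simp only: pos_le_divide_eq)
  moreover have "\<bar>(\<Sum>k<Suc m. T k (x + h) - T k x) / h\<bar> = \<bar>\<Sum>k<Suc m. T k (x + h) - T k x\<bar> / h"
    using h0 by (simp only: abs_divide abs_of_pos)
  ultimately show ?thesis by linarith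
qed


theorem proposition1:
  fixes \<alpha> M :: real and \<nu> m :: nat
  assumes "0 < \<alpha>" "\<alpha> < 1"
    and "2 * real \<nu> > 1 / (1 - \<alpha>)"
    and "M \<ge> 1"
  shows "1 / (2 * M) * integral {-M..M}
           (\<lambda>x. \<bar>(K_fun \<alpha> \<nu> (x + 1 / 2 ^ (2 * \<nu> * m + 1)) - K_fun \<alpha> \<nu> x)
                  / (1 / 2 ^ (2 * \<nu> * m + 1))\<bar>)
         \<ge> 1 / 4 * K_const m \<nu> \<alpha>"
proof -
  define h :: real where "h = 1 / 2 ^ (2 * \<nu> * m + 1)"
  define T where "T = (\<lambda>k y. 2 powr (- 2 * \<alpha> * real \<nu> * real k) * phi (2 ^ (2 * \<nu> * k) * y))"
  define c where "c = 2 powr (2 * real \<nu> * (1 - \<alpha>))"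
  define C where "C = K_const m \<nu> \<alpha>"
  define f where "f = (\<lambda>x. \<bar>(\<Sum>k<Suc m. T k (x + h) - T k x) / h\<bar>)"
  have a1: "0 < 1 - \<alpha>" using assms by simp
  have "0 < 1 / (1 - \<alpha>)" using a1 by simp
  hence "0 < real \<nu>" using assms(3) by linarith
  hence nu: "0 < \<nu>" by simp
  have "1 < 2 * real \<nu> * (1 - \<alpha>)" using assms(3) a1 by (simp add: divide_less_eq mult.commute)
  hence c2: "c > 2" unfolding c_def
    using powr_less_cancel_iff[of "2::real" 1 "2 * real \<nu> * (1 - \<alpha>)"] by simp
  have Cdef: "C = (c - 2) / (c - 1) * c ^ m" unfolding C_def K_const_def c_def ..
  have C0: "0 \<le> C" unfolding Cdef using c2 by simp
  have gs: "(\<Sum>k<m. c ^ k) = (c ^ m - 1) / (c - 1)"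
  proof -
    have "(1 - c ^ m) / (1 - c) = (c ^ m - 1) / (c - 1)"
      by (metis minus_diff_eq minus_divide_divide)
    thus ?thesis using c2 sum_gp_strict[of c m] by simp
  qed
  have Cle: "C \<le> c ^ m - (\<Sum>k<m. c ^ k)"
  proof -
    have "c ^ m - (c ^ m - 1) / (c - 1) = ((c - 2) * c ^ m + 1) / (c - 1)"
      using c2 by (simp add: field_simps)
    moreover have "C \<le> ((c - 2) * c ^ m + 1) / (c - 1)"
    proof -
      have "(c - 2) / (c - 1) * c ^ m = ((c - 2) * c ^ m) / (c - 1)" by simp
      also have "\<dots> \<le> ((c - 2) * c ^ m + 1) / (c - 1)"
        using c2 by (intro divide_right_mono) auto
      finally show ?thesis unfolding Cdef .
    qed
    ultimately show ?thesis using gs by simp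
  qed
  have h0: "h > 0" unfolding h_def by simp
  have eq: "(\<lambda>x. \<bar>(K_fun \<alpha> \<nu> (x + 1 / 2 ^ (2 * \<nu> * m + 1)) - K_fun \<alpha> \<nu> x)
                  / (1 / 2 ^ (2 * \<nu> * m + 1))\<bar>) = f"
  proof -
    have d: "K_fun \<alpha> \<nu> (x + h) - K_fun \<alpha> \<nu> x = (\<Sum>k<Suc m. T k (x + h) - T k x)" for x
      unfolding h_def T_def by (rule diff_finite[OF assms(1) nu])
    show ?thesis unfolding f_def h_def[symmetric] by (rule ext) (simp only: d)
  qed
  have cont: "continuous_on UNIV f"
    unfolding f_def T_def using h0 by (intro continuous_intros) auto
  have q0: "(0::real) < 1 / 2 ^ (2 * \<nu> * m)" by simp
  have qM: "(1::real) / 2 ^ (2 * \<nu> * m) \<le> M" using assms(4)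
  proof -
    have "(1::real) / 2 ^ (2 * \<nu> * m) \<le> 1" by simp
    thus ?thesis using assms(4) by linarith
  qed
  have I: "integral {-M..M} f \<ge> C * M / 2"
  proof (rule integral_lower[OF cont _ q0 C0 _ qM])
    show "0 \<le> f x" for x unfolding f_def by simp
    fix j :: int and x :: real
    assume "real_of_int j * (1 / 2 ^ (2 * \<nu> * m)) \<le> x" "x \<le> (real_of_int j + 1 / 2) * (1 / 2 ^ (2 * \<nu> * m))"
    from pointwise[OF assms(1) nu this]
    have "f x \<ge> c ^ m - (\<Sum>k<m. c ^ k)" unfolding f_def h_def T_def c_def .
    thus "C \<le> f x" using Cle by linarith
  qed
  have "1 / (2 * M) * integral {-M..M} f \<ge> 1 / (2 * M) * (C * M / 2)"
    using I assms(4) by (intro mult_left_mono) auto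
  moreover have "1 / (2 * M) * (C * M / 2) = 1 / 4 * C" using assms(4) by (simp add: field_simps)
  ultimately show ?thesis unfolding eq C_def by simp
qed

end
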